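(* Fix $t\in\{1,\dots,M\}$. For every $z^*\in F(\mathcal{T}_t)$, the number of active indices of $C_t$ at $z^*$ satisfies $|K_t(z^* )|\in\{1,2\}$.
   Context: Fix reals $W,H>0$, integers $N\ge N_m\ge 2$, and widths $w_i>0$, heights $h_i>0$ for $1\le i\le N_m$. Points of $\mathbb{R}^{2N}$ are written $z=(x,y)$ with $x=(x_1,\dots,x_N)$, $y=(y_1,\dots,y_N)$. For $1\le i\le N_m$ let $B_i^x=\{z: 0\le x_i\le W-w_i\}$, $B_i^y=\{z: 0\le y_i\le H-h_i\}$; for $i\neq j$ let $B_{i,j}=B_i^x\cap B_i^y\cap B_j^x\cap B_j^y$, $O^x_{i,j}=\{z: x_i+w_i\le x_j\}$, $O^y_{i,j}=\{z: y_i+h_i\le y_j\}$. Define the closed convex sets $C_{i,j,\mathsf{L}}=O^x_{i,j}\cap B_{i,j}$, $C_{i,j,\mathsf{R}}=O^x_{j,i}\cap B_{i,j}$, $C_{i,j,\mathsf{B}}=O^y_{i,j}\cap B_{i,j}$, $C_{i,j,\mathsf{A}}=O^y_{j,i}\cap B_{i,j}$ (assumed nonempty) and $C_{i,j}=C_{i,j,\mathsf{L}}\cup C_{i,j,\mathsf{R}}\cup C_{i,j,\mathsf{B}}\cup C_{i,j,\mathsf{A}}$. Enumerate the pairs $1\le i<j\le N_m$ by $t=1,\dots,M$ and write $C_t=C_{i,j}$, $C_{t,k}=C_{i,j,k}$. With the Euclidean norm and $\mathrm{d}(z,C)=\inf_{c\in C}\|z-c\|$: $\mathcal{P}_t(z)=\{c\in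 C_t:\|z-c\|=\mathrm{d}(z,C_t)\}$, $P_{t,k}(z)$ is the unique nearest point of $C_{t,k}$ to $z$; for a fixed $\lambda\in(0,2)$, $\mathcal{T}_t(z)=\{z+\lambda(p-z):p\in\mathcal{P}_t(z)\}$, $F(\mathcal{T}_t)=\{z: z\in\mathcal{T}_t(z)\}$. Active indices: $K_t(z)=\{k\in\{\mathsf{L},\mathsf{R},\mathsf{B},\mathsf{A}\}: P_{t,k}(z)\in\mathcal{P}_t(z)\}$. *)

theory Defs
  imports "HOL-Analysis.Analysis"
begin

text \<open>Points of R^(2N) are pairs z = (x, y) of vectors in real^'n, CARD('n) = N;
  the product carries the Euclidean norm sqrt(|x|^2 + |y|^2).\<close>

type_synonym 'n pt = "(real^'n) \<times> (real^'n)"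

datatype side = sL | sR | sB | sA

definition Bx :: "real \<Rightarrow> ('n::finite \<Rightarrow> real) \<Rightarrow> 'n \<Rightarrow> 'n pt set" where
  "Bx W w i = {z. 0 \<le> fst z $ i \<and> fst z $ i \<le> W - w i}"

definition By :: "real \<Rightarrow> ('n::finite \<Rightarrow> real) \<Rightarrow> 'n \<Rightarrow> 'n pt set" where
  "By H h i = {z. 0 \<le> snd z $ i \<and> snd z $ i \<le> H - h i}"

definition Bij :: "real \<Rightarrow> real \<Rightarrow> ('n::finite \<Rightarrow> real) \<Rightarrow> ('n \<Rightarrow> real) \<Rightarrow> 'n \<Rightarrow> 'n \<Rightarrow> 'n pt set" where
  "Bij W H w h i j = Bx W w i \<inter> By H h i \<inter> Bx W w j \<inter> By H h j"

definition Ox :: "('n::finite \<Rightarrow> real) \<Rightarrow> 'n \<Rightarrow> 'n \<Rightarrow> 'n pt set" where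
  "Ox w i j = {z. fst z $ i + w i \<le> fst z $ j}"

definition Oy :: "('n::finite \<Rightarrow> real) \<Rightarrow> 'n \<Rightarrow> 'n \<Rightarrow> 'n pt set" where
  "Oy h i j = {z. snd z $ i + h i \<le> snd z $ j}"

definition Cpiece :: "real \<Rightarrow> real \<Rightarrow> ('n::finite \<Rightarrow> real) \<Rightarrow> ('n \<Rightarrow> real) \<Rightarrow> 'n \<Rightarrow> 'n \<Rightarrow> side \<Rightarrow> 'n pt set" where
  "Cpiece W H w h i j k = (case k of
      sL \<Rightarrow> Ox w i j \<inter> Bij W H w h i j
    | sR \<Rightarrow> Ox w j i \<inter> Bij W H w h i j
    | sB \<Rightarrow> Oy h i j \<inter> Bij W H w h i j
    | sA \<Rightarrow> Oy h j i \<inter> Bij W H w h i j)"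

definition Cunion :: "real \<Rightarrow> real \<Rightarrow> ('n::finite \<Rightarrow> real) \<Rightarrow> ('n \<Rightarrow> real) \<Rightarrow> 'n \<Rightarrow> 'n \<Rightarrow> 'n pt set" where
  "Cunion W H w h i j = (\<Union>k. Cpiece W H w h i j k)"

definition projSet :: "'a::metric_space set \<Rightarrow> 'a \<Rightarrow> 'a set" where
  "projSet C z = {c \<in> C. dist z c = infdist z C}"

definition relaxOp :: "real \<Rightarrow> 'a::real_normed_vector set \<Rightarrow> 'a \<Rightarrow> 'a set" where
  "relaxOp lam C z = {z + lam *\<^sub>R (p - z) | p. p \<in> projSet C z}"

definition fixSet :: "('a \<Rightarrow> 'a set) \<Rightarrow> 'a set" where
  "fixSet T = {z. z \<in> T z}"

definition activeIdx :: "real \<Rightarrow> real \<Rightarrow> ('n::finite \<Rightarrow> real) \<Rightarrow> ('n \<Rightarrow> real) \<Rightarrow> 'n \<Rightarrow> 'n \<Rightarrow> 'n pt \<Rightarrow> side set" where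
  "activeIdx W H w h i j z =
     {k. closest_point (Cpiece W H w h i j k) z \<in> projSet (Cunion W H w h i j) z}"

end

theory Submission
  imports Defs
begin

lemma closed_Bx: "closed (Bx W w i)"
  unfolding Bx_def by (intro closed_Collect_conj closed_Collect_le continuous_intros)
lemma closed_By: "closed (By H h i)"
  unfolding By_def by (intro closed_Collect_conj closed_Collect_le continuous_intros)
lemma closed_Ox: "closed (Ox w i j)"
  unfolding Ox_def by (intro closed_Collect_conj closed_Collect_le continuous_intros)
lemma closed_Oy: "closed (Oy h i j)"
  unfolding Oy_def by (intro closed_Collect_conj closed_Collect_le continuous_intros)
lemma closed_Cpiece: "closed (Cpiece W H w h i j k)"
  unfolding Cpiece_def Bij_def
  by (cases k) (auto intro!: closed_Int closed_Bx closed_By closed_Ox closed_Oy)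

theorem mainTheorem4:
  fixes W H lam :: real and w h :: "'n::{finite,linorder} \<Rightarrow> real"
    and Mods :: "'n set" and i j :: 'n and zs :: "'n pt"
  assumes "W > 0" and "H > 0"
    and "card Mods \<ge> 2"
    and "\<And>m. m \<in> Mods \<Longrightarrow> w m > 0 \<and> h m > 0"
    and "i \<in> Mods" and "j \<in> Mods" and "i < j"
    and "\<And>k. Cpiece W H w h i j k \<noteq> {}"
    and "0 < lam" and "lam < 2"
    and "zs \<in> fixSet (relaxOp lam (Cunion W H w h i j))"
  shows "card (activeIdx W H w h i j zs) \<in> {1, 2}"
proof -
  let ?C = "Cunion W H w h i j"
  let ?P = "Cpiece W H w h i j"
  obtain p where p: "p \<in> projSet ?C zs" and eq: "zs = zs + lam *\<^sub>R (p - zs)"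
    using assms(11) unfolding fixSet_def relaxOp_def by blast
  have "lam *\<^sub>R (p - zs) = 0" using eq by (metis add_cancel_left_right)
  hence "p = zs" using assms(9) by simp
  hence zC: "zs \<in> ?C" using p unfolding projSet_def by auto
  have proj: "projSet ?C zs = {zs}"
    using zC unfolding projSet_def by auto
  have act: "activeIdx W H w h i j zs = {k. zs \<in> ?P k}"
  proof (intro set_eqI iffI)
    fix k assume "k \<in> activeIdx W H w h i j zs"
    hence "closest_point (?P k) zs = zs" using proj unfolding activeIdx_def by auto
    moreover have "closest_point (?P k) zs \<in> ?P k"
      by (rule closest_point_in_set[OF closed_Cpiece assms(8)])
    ultimately show "k \<in> {k. zs \<in> ?P k}" by simp
  next
    fix k assume "k \<in> {k. zs \<in> ?P k}"
    hence "closest_point (?P k) zs = zs" by (simp add: closest_point_self)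
    thus "k \<in> activeIdx W H w h i j zs" using proj unfolding activeIdx_def by auto
  qed
  have wp: "w i > 0" "w j > 0" "h i > 0" "h j > 0" using assms(4-6) by auto
  have nLR: "\<not> (zs \<in> ?P sL \<and> zs \<in> ?P sR)"
    using wp unfolding Cpiece_def Ox_def by auto
  have nBA: "\<not> (zs \<in> ?P sB \<and> zs \<in> ?P sA)"
    using wp unfolding Cpiece_def Oy_def by auto
  obtain k0 where k0: "zs \<in> ?P k0" using zC unfolding Cunion_def by auto
  define S where "S = {k. zs \<in> ?P k}"
  have fin: "finite S"
  proof -
    have "S \<subseteq> {sL, sR, sB, sA}"
    proof
      fix k show "k \<in> {sL, sR, sB, sA}" by (cases k) auto
    qed
    thus ?thesis by (rule finite_subset) simp
  qed
  have ne: "card S \<ge> 1" using k0 fin unfolding S_def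
    by (metis (mono_tags, lifting) One_nat_def Suc_leI card_gt_0_iff empty_iff mem_Collect_eq)
  have sub: "\<exists>a b. S \<subseteq> {a, b}"
  proof -
    have e1: "\<exists>a. S \<inter> {sL, sR} \<subseteq> {a}" using nLR unfolding S_def by auto
    have e2: "\<exists>b. S \<inter> {sB, sA} \<subseteq> {b}" using nBA unfolding S_def by auto
    have e3: "S = (S \<inter> {sL, sR}) \<union> (S \<inter> {sB, sA})"
    proof (intro set_eqI iffI)
      fix k assume "k \<in> S" thus "k \<in> (S \<inter> {sL, sR}) \<union> (S \<inter> {sB, sA})" by (cases k) auto
    qed auto
    obtain a where a: "S \<inter> {sL, sR} \<subseteq> {a}" using e1 by blast
    obtain b where b: "S \<inter> {sB, sA} \<subseteq> {b}" using e2 by blast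
    have "S \<subseteq> {a, b}" using a b e3 by auto
    thus ?thesis by blast
  qed
  then obtain a b where "S \<subseteq> {a, b}" by blast
  hence "card S \<le> card {a, b}" by (intro card_mono) auto
  also have "\<dots> \<le> 2" by (simp add: card_insert_le_m1)
  finally have "card S \<le> 2" .
  with ne have "card S \<in> {1, 2}" by auto
  thus ?thesis using act S_def by simp
qed

end
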